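(* Let $A\in M_n(\mathbb{C})$ be skew-symmetric ($A^\top=-A$). There is an $n\times n$ matrix $C=C(A)$, each of whose entries is a polynomial with real coefficients in the entries of $A$, such that the first column of $CAC^\top$ has all entries equal to zero except possibly the entry in the second row, and such that $\det(C(A))$, viewed as a polynomial in the entries of $A$, is not the zero polynomial. *)

theory Defs
  imports "Jordan_Normal_Form.Determinant"
begin

text \<open>Functions of an n x n complex matrix that are given by a polynomial with real
coefficients in the entries A(i,j), i,j < n (indices are 0-based).\<close>
inductive real_poly_fun :: "nat \<Rightarrow> (complex mat \<Rightarrow> complex) \<Rightarrow> bool" for n :: nat where
  const: "real_poly_fun n (\<lambda>A. complex_of_real c)"
| var: "i < n \<Longrightarrow> j < n \<Longrightarrow> real_poly_fun n (\<lambda>A. A $$ (i, j))"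
| add: "real_poly_fun n f \<Longrightarrow> real_poly_fun n g \<Longrightarrow> real_poly_fun n (\<lambda>A. f A + g A)"
| mult: "real_poly_fun n f \<Longrightarrow> real_poly_fun n g \<Longrightarrow> real_poly_fun n (\<lambda>A. f A * g A)"

end

theory Submission
  imports Defs
begin

definition CC :: "nat \<Rightarrow> complex mat \<Rightarrow> complex mat" where
  "CC n A = mat n n (\<lambda>(i,j). if i < 2 then (if i = j then 1 else 0)
      else if j = i then A $$ (1,0) else if j = 1 then - A $$ (i,0) else 0)"

lemma CC_carrier: "CC n A \<in> carrier_mat n n" by (simp add: CC_def)

lemma CC_poly: "i < n \<Longrightarrow> j < n \<Longrightarrow> real_poly_fun n (\<lambda>A. CC n A $$ (i, j))"
proof -
  assume ij: "i < n" "j < n"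
  have c0: "real_poly_fun n (\<lambda>A. 0)" using real_poly_fun.const[of n 0] by simp
  have c1: "real_poly_fun n (\<lambda>A. 1)" using real_poly_fun.const[of n 1] by simp
  have cm: "real_poly_fun n (\<lambda>A. -1)" using real_poly_fun.const[of n "-1"] by simp
  show ?thesis
  proof (cases "i < 2")
    case True then show ?thesis using ij c0 c1 by (simp add: CC_def)
  next
    case False
    then have "1 < n" using ij by auto
    then have v1: "real_poly_fun n (\<lambda>A. A $$ (1,0))" by (intro real_poly_fun.var) auto
    have v2: "real_poly_fun n (\<lambda>A. A $$ (i,0))" using ij by (intro real_poly_fun.var) auto
    have v3: "real_poly_fun n (\<lambda>A. - A $$ (i,0))"
      using real_poly_fun.mult[OF cm v2] by simp
    show ?thesis using False ij c0 v1 v3 by (cases "j = i"; cases "j = 1") (simp_all add: CC_def)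
  qed
qed

lemma key:
  assumes A: "A \<in> carrier_mat n n" and sk: "transpose_mat A = - A" and i: "i < n" and i1: "i \<noteq> 1"
  shows "(CC n A * A * transpose_mat (CC n A)) $$ (i, 0) = 0"
proof -
  have n0: "0 < n" using i by auto
  have skew: "\<And>a b. a < n \<Longrightarrow> b < n \<Longrightarrow> A $$ (b,a) = - A $$ (a,b)"
  proof -
    fix a b assume "a < n" "b < n"
    then have "transpose_mat A $$ (a,b) = (- A) $$ (a,b)" using sk by simp
    then show "A $$ (b,a) = - A $$ (a,b)" using A \<open>a<n\<close> \<open>b<n\<close> by simp
  qed
  let ?C = "CC n A"
  have colT: "col (transpose_mat ?C) 0 = unit_vec n 0"
    using n0 by (auto simp: CC_def)
  have "(?C * A * transpose_mat ?C) $$ (i, 0) = row (?C * A) i \<bullet> unit_vec n 0"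
    using i n0 A colT by (simp add: CC_def)
  also have "\<dots> = (?C * A) $$ (i, 0)"
    using i n0 A by (simp add: CC_def)
  also have "\<dots> = (\<Sum>k<n. ?C $$ (i,k) * A $$ (k,0))"
    using i n0 A by (simp add: scalar_prod_def CC_def lessThan_atLeast0)
  also have "\<dots> = 0"
  proof (cases "i = 0")
    case True
    have "A $$ (0,0) = 0" using skew[OF n0 n0] by simp
    then show ?thesis using True n0 by (simp add: CC_def sum.remove[of "{..<n}" 0])
  next
    case False
    then have i2: "2 \<le> i" using i1 by auto
    have "(\<Sum>k<n. ?C $$ (i,k) * A $$ (k,0)) = (\<Sum>k\<in>{1,i}. ?C $$ (i,k) * A $$ (k,0))"
      by (rule sum.mono_neutral_right) (use i i2 in \<open>auto simp: CC_def\<close>)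
    also have "\<dots> = 0" using i i2 by (simp add: CC_def)
    finally show ?thesis .
  qed
  finally show ?thesis .
qed

theorem lemmaI4:
  fixes n :: nat
  shows "\<exists>C :: complex mat \<Rightarrow> complex mat.
     (\<forall>A. C A \<in> carrier_mat n n) \<and>
     (\<forall>i<n. \<forall>j<n. real_poly_fun n (\<lambda>A. C A $$ (i, j))) \<and>
     (\<forall>A. A \<in> carrier_mat n n \<longrightarrow> transpose_mat A = - A \<longrightarrow>
        (\<forall>i<n. i \<noteq> 1 \<longrightarrow> (C A * A * transpose_mat (C A)) $$ (i, 0) = 0)) \<and>
     (\<exists>A \<in> carrier_mat n n. transpose_mat A = - A \<and> det (C A) \<noteq> 0)"
proof (rule exI[of _ "CC n"], intro conjI)
  show "\<forall>A. CC n A \<in> carrier_mat n n" by (simp add: CC_carrier)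
next
  show "\<forall>i<n. \<forall>j<n. real_poly_fun n (\<lambda>A. CC n A $$ (i, j))" using CC_poly by blast
next
  show "\<forall>A. A \<in> carrier_mat n n \<longrightarrow> transpose_mat A = - A \<longrightarrow> (\<forall>i<n. i \<noteq> 1 \<longrightarrow> (CC n A * A * transpose_mat (CC n A)) $$ (i, 0) = 0)"
    using key by blast
next
  define A0 :: "complex mat" where "A0 = mat n n (\<lambda>(i,j). if i = 1 \<and> j = 0 then 1
      else if i = 0 \<and> j = 1 then -1 else 0)"
  have A0c: "A0 \<in> carrier_mat n n" by (simp add: A0_def)
  have sk: "transpose_mat A0 = - A0"
    by (rule eq_matI) (auto simp: A0_def)
  have "det (CC n A0) = prod_list (diag_mat (CC n A0))"
    by (rule det_lower_triangular[OF _ CC_carrier]) (auto simp: CC_def)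
  also have "\<dots> = 1"
  proof -
    have "diag_mat (CC n A0) = map (\<lambda>_. 1) [0..<n]"
      by (auto simp: diag_mat_def CC_def A0_def)
    moreover have "\<And>xs::nat list. prod_list (map (\<lambda>_. (1::complex)) xs) = 1"
      by (induct_tac xs) auto
    ultimately show ?thesis by simp
  qed
  finally show "\<exists>A\<in>carrier_mat n n. transpose_mat A = - A \<and> det (CC n A) \<noteq> 0"
    using A0c sk by auto
qed

end
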